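(* Algorithm 1 is monotonic. Moreover, for a connected graph $G$ with $n\ge2$ nodes, diameter $D$, nonnegative real loads with initial discrepancy $K>0$, and any $\epsilon>0$, after at most $(2nD+1)\ln(\lceil 2nK^2/\epsilon^2\rceil)$ rounds (hence $O(nD\log(nK/\epsilon))$ time, each round taking a constant number of communication steps; the paper states the bound $(6n+3)D\ln(\lceil nK^2/(\epsilon^2/2)\rceil)$ time units) the discrepancy of $G$ is at most $\epsilon$, and it remains at most $\epsilon$ thereafter.
   Context: $G=(V,E)$ is an undirected connected graph, $n=|V|$, $D$ its diameter; each node $u$ holds a load $load(u)\ge 0$ (real). $L_{max},L_{min}$ denote the current maximum and minimum load and the discrepancy is $K=L_{max}-L_{min}$. Algorithm 1 (single proposal, continuous) proceeds in synchronous rounds; in each round, using the loads at the start of the round: (1) every node $u$ having at least one neighbor with strictly smaller load picks a neighbor $v$ maximizing $load(u)-load(v)$ (ties broken arbitrarily) and sends $v$ a proposal of value $p_{uv}=(load(u)-load(v))/2$; (2) every node that received at least one proposal accepts exactly one proposal of maximum value (ties arbitrary); (3) all accepted transfers are executed simultaneously (each accepted proposal $p_{wu}$ moves $p_{wu}$ from $w$ to $u$), and nodes report their new loads to neighbors. An algorithm is monotonic if in every execution (a) each load transfer goes from a higher-loaded node to a less-loaded one, and (b) the maximum load never increases and the minimum load never decreases. *)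

theory Defs
  imports Complex_Main
begin

definition ugraph :: "'a set \<Rightarrow> ('a \<Rightarrow> 'a \<Rightarrow> bool) \<Rightarrow> bool" where
  "ugraph V E \<longleftrightarrow> finite V \<and> V \<noteq> {} \<and>
     (\<forall>u v. E u v \<longrightarrow> u \<in> V \<and> v \<in> V) \<and>
     (\<forall>u v. E u v \<longrightarrow> E v u) \<and> (\<forall>u. \<not> E u u)"

definition connected_graph :: "'a set \<Rightarrow> ('a \<Rightarrow> 'a \<Rightarrow> bool) \<Rightarrow> bool" where
  "connected_graph V E \<longleftrightarrow> (\<forall>u\<in>V. \<forall>v\<in>V. (u, v) \<in> {(x, y). E x y}\<^sup>*)"

definition walk :: "('a \<Rightarrow> 'a \<Rightarrow> bool) \<Rightarrow> 'a list \<Rightarrow> 'a \<Rightarrow> 'a \<Rightarrow> nat \<Rightarrow> bool" where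
  "walk E xs u v k \<longleftrightarrow> length xs = Suc k \<and> hd xs = u \<and> last xs = v \<and>
     (\<forall>i<k. E (xs ! i) (xs ! Suc i))"

definition gdist :: "('a \<Rightarrow> 'a \<Rightarrow> bool) \<Rightarrow> 'a \<Rightarrow> 'a \<Rightarrow> nat" where
  "gdist E u v = (LEAST k. \<exists>xs. walk E xs u v k)"

definition diameter :: "'a set \<Rightarrow> ('a \<Rightarrow> 'a \<Rightarrow> bool) \<Rightarrow> nat" where
  "diameter V E = Max {gdist E u v | u v. u \<in> V \<and> v \<in> V}"

definition Lmax :: "'a set \<Rightarrow> ('a \<Rightarrow> real) \<Rightarrow> real" where
  "Lmax V l = Max (l ` V)"

definition Lmin :: "'a set \<Rightarrow> ('a \<Rightarrow> real) \<Rightarrow> real" where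
  "Lmin V l = Min (l ` V)"

definition discrepancy :: "'a set \<Rightarrow> ('a \<Rightarrow> real) \<Rightarrow> real" where
  "discrepancy V l = Lmax V l - Lmin V l"

text \<open>From loads l, with the
  set T of accepted proposals (pairs (w,u): w's proposal to u accepted; amount
  (l w - l u)/2), the new loads are l'.  The choice functions prop / acc encode
  the arbitrary tie-breaking.\<close>
definition alg1_round ::
  "'a set \<Rightarrow> ('a \<Rightarrow> 'a \<Rightarrow> bool) \<Rightarrow> ('a \<Rightarrow> real) \<Rightarrow> ('a \<times> 'a) set \<Rightarrow> ('a \<Rightarrow> real) \<Rightarrow> bool" where
  "alg1_round V E l T l' \<longleftrightarrow>
    (\<exists>prop acc :: 'a \<Rightarrow> 'a option.
      (\<forall>u\<in>V. if (\<exists>v. E u v \<and> l v < l u)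
               then (\<exists>v. prop u = Some v \<and> E u v \<and> (\<forall>w. E u w \<longrightarrow> l u - l w \<le> l u - l v))
               else prop u = None) \<and>
      (\<forall>u\<in>V. if (\<exists>w\<in>V. prop w = Some u)
               then (\<exists>w\<in>V. acc u = Some w \<and> prop w = Some u \<and>
                       (\<forall>w'\<in>V. prop w' = Some u \<longrightarrow> (l w' - l u) / 2 \<le> (l w - l u) / 2))
               else acc u = None) \<and>
      T = {(w, u). w \<in> V \<and> u \<in> V \<and> acc u = Some w} \<and>
      (\<forall>u\<in>V. l' u = l u + (\<Sum>(w, v) \<in> T \<inter> (V \<times> {u}). (l w - l v) / 2)
                         - (\<Sum>(w, v) \<in> T \<inter> ({u} \<times> V). (l w - l v) / 2)) \<and>
      (\<forall>u. u \<notin> V \<longrightarrow> l' u = l u))"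

definition alg1_execution ::
  "'a set \<Rightarrow> ('a \<Rightarrow> 'a \<Rightarrow> bool) \<Rightarrow> (nat \<Rightarrow> 'a \<Rightarrow> real) \<Rightarrow> (nat \<Rightarrow> ('a \<times> 'a) set) \<Rightarrow> bool" where
  "alg1_execution V E ls Ts \<longleftrightarrow> (\<forall>t. alg1_round V E (ls t) (Ts t) (ls (Suc t)))"

definition alg1_monotonic :: "'a set \<Rightarrow> ('a \<Rightarrow> 'a \<Rightarrow> bool) \<Rightarrow> bool" where
  "alg1_monotonic V E \<longleftrightarrow>
    (\<forall>ls Ts. alg1_execution V E ls Ts \<longrightarrow>
       (\<forall>t. \<forall>(w, u) \<in> Ts t. ls t u < ls t w) \<and>
       (\<forall>t. Lmax V (ls (Suc t)) \<le> Lmax V (ls t) \<and> Lmin V (ls t) \<le> Lmin V (ls (Suc t))))"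

end

theory Submission
  imports Defs
begin

definition inflow :: "'a set \<Rightarrow> ('a \<Rightarrow> real) \<Rightarrow> ('a \<times> 'a) set \<Rightarrow> 'a \<Rightarrow> real" where
  "inflow V l T u = (\<Sum>(w, v) \<in> T \<inter> (V \<times> {u}). (l w - l v) / 2)"
definition outflow :: "'a set \<Rightarrow> ('a \<Rightarrow> real) \<Rightarrow> ('a \<times> 'a) set \<Rightarrow> 'a \<Rightarrow> real" where
  "outflow V l T u = (\<Sum>(w, v) \<in> T \<inter> ({u} \<times> V). (l w - l v) / 2)"

definition good_round where
  "good_round V E l T l' \<longleftrightarrow> T \<subseteq> V \<times> V \<and> (\<forall>(w,u)\<in>T. l u < l w) \<and>
    (\<forall>w w' u. (w,u)\<in>T \<longrightarrow> (w',u)\<in>T \<longrightarrow> w=w') \<and>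
    (\<forall>u v v'. (u,v)\<in>T \<longrightarrow> (u,v')\<in>T \<longrightarrow> v=v') \<and>
    (\<forall>u\<in>V. l' u = l u + inflow V l T u - outflow V l T u) \<and>
    (\<forall>u\<in>V. \<forall>x. E u x \<and> l x < l u \<longrightarrow> (\<exists>w v. (w,v)\<in>T \<and> E u v \<and> l u - l x \<le> l w - l v))"

lemma round_good:
  assumes g: "ugraph V E" and r: "alg1_round V E l T l'"
  shows "good_round V E l T l'"
proof -
  from r obtain pr ac :: "'a \<Rightarrow> 'a option" where
    P: "\<forall>u\<in>V. if (\<exists>v. E u v \<and> l v < l u)
               then (\<exists>v. pr u = Some v \<and> E u v \<and> (\<forall>w. E u w \<longrightarrow> l u - l w \<le> l u - l v))
               else pr u = None" and
    A: "\<forall>u\<in>V. if (\<exists>w\<in>V. pr w = Some u)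
               then (\<exists>w\<in>V. ac u = Some w \<and> pr w = Some u \<and>
                       (\<forall>w'\<in>V. pr w' = Some u \<longrightarrow> (l w' - l u) / 2 \<le> (l w - l u) / 2))
               else ac u = None" and
    T: "T = {(w, u). w \<in> V \<and> u \<in> V \<and> ac u = Some w}" and
    L: "\<forall>u\<in>V. l' u = l u + (\<Sum>(w, v) \<in> T \<inter> (V \<times> {u}). (l w - l v) / 2)
                         - (\<Sum>(w, v) \<in> T \<inter> ({u} \<times> V). (l w - l v) / 2)"
    unfolding alg1_round_def by blast
  have EV: "E u v \<Longrightarrow> v \<in> V" for u v using g unfolding ugraph_def by blast
  have accprop: "pr w = Some u" if "(w,u) \<in> T" for w u
  proof -
    from that T have u: "u \<in> V" "ac u = Some w" by auto
    then have "\<exists>w\<in>V. pr w = Some u" using A by (metis option.distinct(1))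
    then have "\<exists>w'\<in>V. ac u = Some w' \<and> pr w' = Some u" using A u(1) by (metis (no_types, lifting))
    then show ?thesis using u by auto
  qed
  have propdec: "l v < l u" if "u \<in> V" "pr u = Some v" for u v
  proof -
    have "\<exists>v. E u v \<and> l v < l u" using P that by (metis option.distinct(1))
    then obtain x where x: "E u x" "l x < l u" by blast
    have "\<exists>v'. pr u = Some v' \<and> (\<forall>w. E u w \<longrightarrow> l u - l w \<le> l u - l v')"
      using P that(1) x by (metis (no_types, lifting))
    then obtain v' where "pr u = Some v'" "\<forall>w. E u w \<longrightarrow> l u - l w \<le> l u - l v'" by blast
    with that x show ?thesis by force
  qed
  have 1: "T \<subseteq> V \<times> V" using T by auto
  have 2: "\<forall>(w,u)\<in>T. l u < l w"
  proof safe
    fix w u assume "(w,u) \<in> T"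
    then show "l u < l w" using propdec[of w u] accprop T by auto
  qed
  have 3: "\<forall>w w' u. (w,u)\<in>T \<longrightarrow> (w',u)\<in>T \<longrightarrow> w=w'" using T by auto
  have 4: "\<forall>u v v'. (u,v)\<in>T \<longrightarrow> (u,v')\<in>T \<longrightarrow> v=v'" by (metis accprop option.inject)
  have 5: "\<forall>u\<in>V. \<forall>x. E u x \<and> l x < l u \<longrightarrow> (\<exists>w v. (w,v)\<in>T \<and> E u v \<and> l u - l x \<le> l w - l v)"
  proof safe
    fix u x assume u: "u \<in> V" and x: "E u x" "l x < l u"
    from P u x obtain v where v: "pr u = Some v" "E u v" "\<forall>w. E u w \<longrightarrow> l u - l w \<le> l u - l v"
      by (metis (no_types, lifting))
    have vV: "v \<in> V" using EV v by blast
    then have ex: "\<exists>w\<in>V. pr w = Some v" using u v by blast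
    from bspec[OF A vV] obtain w where w: "w \<in> V" "ac v = Some w" "pr w = Some v"
       "\<forall>w'\<in>V. pr w' = Some v \<longrightarrow> (l w' - l v) / 2 \<le> (l w - l v) / 2" unfolding if_P[OF ex] by blast
    have "(w, v) \<in> T" using T w vV by auto
    moreover have "l u - l x \<le> l w - l v" using w(4) u v x by force
    ultimately show "\<exists>w v. (w,v)\<in>T \<and> E u v \<and> l u - l x \<le> l w - l v" using v by blast
  qed
  show ?thesis unfolding good_round_def inflow_def outflow_def using 1 2 3 4 5 L by blast
qed

lemma fiber_sum:
  assumes "finite T" "finite V" "f ` T \<subseteq> V"
  shows "(\<Sum>u\<in>V. \<Sum>p\<in>{p\<in>T. f p = u}. h u p) = (\<Sum>p\<in>T. h (f p) p)"
proof -
  have "(\<Sum>u\<in>V. \<Sum>p\<in>{p\<in>T. f p = u}. h u p) = (\<Sum>u\<in>V. \<Sum>p\<in>{p\<in>T. f p = u}. h (f p) p)"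
    by (intro sum.cong) auto
  also have "\<dots> = (\<Sum>p\<in>T. h (f p) p)"
    using sum.group[OF assms, of "\<lambda>p. h (f p) p"] by simp
  finally show ?thesis .
qed

lemma sq_sum_le1:
  fixes g :: "'b \<Rightarrow> real"
  assumes "\<forall>x\<in>S. \<forall>y\<in>S. x = y" "finite S"
  shows "(sum g S)\<^sup>2 = (\<Sum>x\<in>S. (g x)\<^sup>2)"
proof (cases "S = {}")
  case False
  then obtain a where "a \<in> S" by blast
  with assms have "S = {a}" by blast
  then show ?thesis by simp
qed simp

lemma potential:
  assumes fin: "finite V" and gr: "good_round V E l T l'"
  shows "(\<Sum>u\<in>V. (l' u - c)\<^sup>2) \<le> (\<Sum>u\<in>V. (l u - c)\<^sup>2) - (\<Sum>(w,v)\<in>T. (l w - l v)\<^sup>2) / 2"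
    and "(\<Sum>u\<in>V. l' u) = (\<Sum>u\<in>V. l u)"
proof -
  define g where "g p = (l (fst p) - l (snd p)) / 2" for p
  have TV: "T \<subseteq> V \<times> V" and dec: "\<forall>(w,u)\<in>T. l u < l w"
    and in1: "\<forall>w w' u. (w,u)\<in>T \<longrightarrow> (w',u)\<in>T \<longrightarrow> w=w'"
    and out1: "\<forall>u v v'. (u,v)\<in>T \<longrightarrow> (u,v')\<in>T \<longrightarrow> v=v'"
    and L: "\<forall>u\<in>V. l' u = l u + inflow V l T u - outflow V l T u"
    using gr unfolding good_round_def by blast+
  have finT: "finite T" using TV fin by (meson finite_SigmaI finite_subset)
  define I where "I u = sum g {p\<in>T. snd p = u}" for u
  define Ou where "Ou u = sum g {p\<in>T. fst p = u}" for u
  have gpos: "p \<in> T \<Longrightarrow> g p \<ge> 0" for p using dec unfolding g_def by auto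
  have II: "inflow V l T u = I u" if "u \<in> V" for u
  proof -
    have "T \<inter> (V \<times> {u}) = {p\<in>T. snd p = u}" using TV that by auto
    then show ?thesis unfolding inflow_def I_def g_def by (simp add: case_prod_beta)
  qed
  have OOu: "outflow V l T u = Ou u" if "u \<in> V" for u
  proof -
    have "T \<inter> ({u} \<times> V) = {p\<in>T. fst p = u}" using TV that by auto
    then show ?thesis unfolding outflow_def Ou_def g_def by (simp add: case_prod_beta)
  qed
  have snd_im: "snd ` T \<subseteq> V" and fst_im: "fst ` T \<subseteq> V" using TV by auto
  have Ipos: "I u \<ge> 0" for u unfolding I_def by (rule sum_nonneg) (simp add: gpos)
  have Opos: "Ou u \<ge> 0" for u unfolding Ou_def by (rule sum_nonneg) (simp add: gpos)
  have sI: "(\<Sum>u\<in>V. I u) = (\<Sum>p\<in>T. g p)"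
    unfolding I_def using fiber_sum[OF finT fin snd_im, of "\<lambda>u p. g p"] by simp
  have sO: "(\<Sum>u\<in>V. Ou u) = (\<Sum>p\<in>T. g p)"
    unfolding Ou_def using fiber_sum[OF finT fin fst_im, of "\<lambda>u p. g p"] by simp
  have xI: "(\<Sum>u\<in>V. (l u - c) * I u) = (\<Sum>p\<in>T. (l (snd p) - c) * g p)"
    unfolding I_def sum_distrib_left using fiber_sum[OF finT fin snd_im, of "\<lambda>u p. (l u - c) * g p"] by simp
  have xO: "(\<Sum>u\<in>V. (l u - c) * Ou u) = (\<Sum>p\<in>T. (l (fst p) - c) * g p)"
    unfolding Ou_def sum_distrib_left using fiber_sum[OF finT fin fst_im, of "\<lambda>u p. (l u - c) * g p"] by simp
  have qI: "(\<Sum>u\<in>V. (I u)\<^sup>2) = (\<Sum>p\<in>T. (g p)\<^sup>2)"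
  proof -
    have "(I u)\<^sup>2 = (\<Sum>p\<in>{p\<in>T. snd p = u}. (g p)\<^sup>2)" for u
      unfolding I_def by (rule sq_sum_le1) (use in1 finT in auto)
    then show ?thesis using fiber_sum[OF finT fin snd_im, of "\<lambda>u p. (g p)\<^sup>2"] by simp
  qed
  have qO: "(\<Sum>u\<in>V. (Ou u)\<^sup>2) = (\<Sum>p\<in>T. (g p)\<^sup>2)"
  proof -
    have "(Ou u)\<^sup>2 = (\<Sum>p\<in>{p\<in>T. fst p = u}. (g p)\<^sup>2)" for u
      unfolding Ou_def by (rule sq_sum_le1) (use out1 finT in auto)
    then show ?thesis using fiber_sum[OF finT fin fst_im, of "\<lambda>u p. (g p)\<^sup>2"] by simp
  qed
  have L2: "l' u = l u + I u - Ou u" if "u \<in> V" for u using L II OOu that by simp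
  have "(\<Sum>u\<in>V. l' u) = (\<Sum>u\<in>V. l u + I u - Ou u)" using L2 by simp
  also have "\<dots> = (\<Sum>u\<in>V. l u)" by (simp add: sum.distrib sum_subtractf sI sO)
  finally show "(\<Sum>u\<in>V. l' u) = (\<Sum>u\<in>V. l u)" .
  have "(\<Sum>u\<in>V. (l' u - c)\<^sup>2) = (\<Sum>u\<in>V. ((l u - c) + (I u - Ou u))\<^sup>2)" by (intro sum.cong) (simp_all add: L2 algebra_simps)
  also have "\<dots> = (\<Sum>u\<in>V. (l u - c)\<^sup>2 + 2 * ((l u - c) * I u) - 2 * ((l u - c) * Ou u) + (I u - Ou u)\<^sup>2)"
    by (intro sum.cong) (auto simp: power2_eq_square algebra_simps)
  also have "\<dots> \<le> (\<Sum>u\<in>V. (l u - c)\<^sup>2 + 2 * ((l u - c) * I u) - 2 * ((l u - c) * Ou u) + ((I u)\<^sup>2 + (Ou u)\<^sup>2))"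
  proof (intro sum_mono)
    fix u
    have "(I u - Ou u)\<^sup>2 \<le> (I u)\<^sup>2 + (Ou u)\<^sup>2" using Ipos[of u] Opos[of u]
      by (simp add: power2_eq_square algebra_simps)
    then show "(l u - c)\<^sup>2 + 2 * ((l u - c) * I u) - 2 * ((l u - c) * Ou u) + (I u - Ou u)\<^sup>2
      \<le> (l u - c)\<^sup>2 + 2 * ((l u - c) * I u) - 2 * ((l u - c) * Ou u) + ((I u)\<^sup>2 + (Ou u)\<^sup>2)" by simp
  qed
  also have "\<dots> = (\<Sum>u\<in>V. (l u - c)\<^sup>2) + 2 * (\<Sum>p\<in>T. (l (snd p) - c) * g p)
      - 2 * (\<Sum>p\<in>T. (l (fst p) - c) * g p) + 2 * (\<Sum>p\<in>T. (g p)\<^sup>2)"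
    by (simp add: sum.distrib sum_subtractf sum_distrib_left[symmetric] xI xO qI qO)
  finally have main: "(\<Sum>u\<in>V. (l' u - c)\<^sup>2) \<le> (\<Sum>u\<in>V. (l u - c)\<^sup>2) + 2 * (\<Sum>p\<in>T. (l (snd p) - c) * g p)
      - 2 * (\<Sum>p\<in>T. (l (fst p) - c) * g p) + 2 * (\<Sum>p\<in>T. (g p)\<^sup>2)" .
  have A: "2 * (\<Sum>p\<in>T. (l (snd p) - c) * g p) - 2 * (\<Sum>p\<in>T. (l (fst p) - c) * g p)
      = - 4 * (\<Sum>p\<in>T. (g p)\<^sup>2)"
  proof -
    have "2 * (\<Sum>p\<in>T. (l (snd p) - c) * g p) - 2 * (\<Sum>p\<in>T. (l (fst p) - c) * g p)
       = (\<Sum>p\<in>T. 2*((l (snd p) - c) * g p) - 2*((l (fst p) - c) * g p))"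
      by (simp add: sum_subtractf sum_distrib_left)
    also have "\<dots> = (\<Sum>p\<in>T. -4 * (g p)\<^sup>2)"
      by (intro sum.cong) (auto simp: g_def power2_eq_square field_simps)
    also have "\<dots> = - 4 * (\<Sum>p\<in>T. (g p)\<^sup>2)" by (simp add: sum_distrib_left)
    finally show ?thesis .
  qed
  have B: "(\<Sum>(w,v)\<in>T. (l w - l v)\<^sup>2) = 4 * (\<Sum>p\<in>T. (g p)\<^sup>2)"
    unfolding sum_distrib_left by (intro sum.cong) (auto simp: g_def power2_eq_square field_simps)
  show "(\<Sum>u\<in>V. (l' u - c)\<^sup>2) \<le> (\<Sum>u\<in>V. (l u - c)\<^sup>2) - (\<Sum>(w,v)\<in>T. (l w - l v)\<^sup>2) / 2"
    using main A B by linarith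
qed

lemma cauchy_sum:
  fixes f :: "'b \<Rightarrow> real"
  assumes "finite A"
  shows "(\<Sum>i\<in>A. f i)\<^sup>2 \<le> real (card A) * (\<Sum>i\<in>A. (f i)\<^sup>2)"
proof -
  define S where "S = (\<Sum>i\<in>A. f i)"
  define Q where "Q = (\<Sum>i\<in>A. (f i)\<^sup>2)"
  have "0 \<le> (\<Sum>i\<in>A. \<Sum>j\<in>A. (f i - f j)\<^sup>2)" by (intro sum_nonneg) auto
  also have "\<dots> = (\<Sum>i\<in>A. real (card A) * (f i)\<^sup>2 + Q - 2 * f i * S)"
  proof (intro sum.cong refl)
    fix i
    have "(\<Sum>j\<in>A. (f i - f j)\<^sup>2) = (\<Sum>j\<in>A. (f i)\<^sup>2 + (f j)\<^sup>2 - 2 * f i * f j)"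
      by (intro sum.cong refl) (simp add: power2_eq_square algebra_simps)
    also have "\<dots> = (\<Sum>j\<in>A. (f i)\<^sup>2) + (\<Sum>j\<in>A. (f j)\<^sup>2) - (\<Sum>j\<in>A. 2 * f i * f j)"
      by (simp add: sum.distrib sum_subtractf)
    also have "(\<Sum>j\<in>A. 2 * f i * f j) = 2 * f i * S"
      unfolding S_def by (simp add: sum_distrib_left)
    finally show "(\<Sum>j\<in>A. (f i - f j)\<^sup>2) = real (card A) * (f i)\<^sup>2 + Q - 2 * f i * S"
      unfolding Q_def by simp
  qed
  also have "\<dots> = (\<Sum>i\<in>A. real (card A) * (f i)\<^sup>2) + (\<Sum>i\<in>A. Q) - (\<Sum>i\<in>A. 2 * f i * S)"
    by (simp add: sum.distrib sum_subtractf)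
  also have "(\<Sum>i\<in>A. 2 * f i * S) = 2 * S * S"
  proof -
    have "(\<Sum>i\<in>A. 2 * f i * S) = (\<Sum>i\<in>A. 2 * f i) * S" by (rule sum_distrib_right[symmetric])
    moreover have "(\<Sum>i\<in>A. 2 * f i) = 2 * S" unfolding S_def by (simp add: sum_distrib_left)
    ultimately show ?thesis by simp
  qed
  also have "(\<Sum>i\<in>A. real (card A) * (f i)\<^sup>2) = real (card A) * Q"
    unfolding Q_def by (simp add: sum_distrib_left)
  finally have "0 \<le> real (card A) * Q + (\<Sum>i\<in>A. Q) - 2 * S * S" .
  moreover have "(\<Sum>i\<in>A. Q) = real (card A) * Q" by simp
  ultimately have "S * S \<le> real (card A) * Q" by linarith
  then show ?thesis unfolding S_def[symmetric] Q_def[symmetric] by (simp add: power2_eq_square)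
qed

lemma walk_exists:
  assumes "(a, b) \<in> {(x, y). E x y}\<^sup>*"
  shows "\<exists>xs k. walk E xs a b k"
  using assms
proof (induction rule: rtrancl_induct)
  case base
  have "walk E [a] a a 0" unfolding walk_def by simp
  then show ?case by blast
next
  case (step y z)
  then obtain xs k where w: "walk E xs a y k" by blast
  have "walk E (xs @ [z]) a z (Suc k)"
    unfolding walk_def
  proof (intro conjI allI impI)
    show "length (xs @ [z]) = Suc (Suc k)" using w unfolding walk_def by simp
    show "hd (xs @ [z]) = a" using w unfolding walk_def by (cases xs) auto
    show "last (xs @ [z]) = z" by simp
    fix i assume i: "i < Suc k"
    show "E ((xs @ [z]) ! i) ((xs @ [z]) ! Suc i)"
    proof (cases "i < k")
      case True
      then show ?thesis using w unfolding walk_def by (simp add: nth_append)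
    next
      case False
      then have "i = k" using i by simp
      moreover have "xs ! k = y" using w unfolding walk_def by (metis diff_Suc_1 last_conv_nth length_0_conv nat.distinct(1))
      ultimately show ?thesis using w step(2) unfolding walk_def by (simp add: nth_append)
    qed
  qed
  then show ?case by blast
qed

lemma gdist_walk:
  assumes "walk E xs a b k"
  shows "gdist E a b \<le> k" "\<exists>ys. walk E ys a b (gdist E a b)"
proof -
  have e: "\<exists>xs. walk E xs a b k" using assms by blast
  show "gdist E a b \<le> k" unfolding gdist_def by (rule Least_le) (rule e)
  have "\<exists>k xs. walk E xs a b k" using assms by blast
  then show "\<exists>ys. walk E ys a b (gdist E a b)" unfolding gdist_def by (rule LeastI_ex)
qed

lemma gdist_le_diam:
  assumes "finite V" "a \<in> V" "b \<in> V"
  shows "gdist E a b \<le> diameter V E"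
proof -
  have eq: "{gdist E u v | u v. u \<in> V \<and> v \<in> V} = (\<lambda>(u,v). gdist E u v) ` (V \<times> V)" by auto
  have "finite {gdist E u v | u v. u \<in> V \<and> v \<in> V}" unfolding eq using assms by simp
  moreover have "gdist E a b \<in> {gdist E u v | u v. u \<in> V \<and> v \<in> V}" using assms by blast
  ultimately show ?thesis unfolding diameter_def by (rule Max_ge)
qed

lemma shortcut:
  assumes w: "walk E xs a b m" and m: "m = gdist E a b" and sym: "\<forall>u v. E u v \<longrightarrow> E v u"
    and ij: "i < j" "j \<le> m" and ei: "E (xs ! i) v" and ej: "E (xs ! j) v"
  shows "j \<le> i + 2"
proof (rule ccontr)
  assume "\<not> j \<le> i + 2"
  then have ji: "i + 3 \<le> j" by simp
  have len: "length xs = Suc m" and hd: "hd xs = a" and la: "last xs = b"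
    and ed: "\<forall>i<m. E (xs ! i) (xs ! Suc i)" using w unfolding walk_def by auto
  define ys where "ys = take (Suc i) xs @ v # drop j xs"
  define k where "k = m + 2 + i - j"
  have lys: "length ys = Suc k" unfolding ys_def k_def using len ij ji by simp
  have "walk E ys a b k"
    unfolding walk_def
  proof (intro conjI allI impI)
    show "length ys = Suc k" by (rule lys)
    show "hd ys = a" unfolding ys_def using hd len by (cases xs) auto
    show "last ys = b" unfolding ys_def using la len ij by (simp add: last_drop)
    fix t assume t: "t < k"
    consider "t < i" | "t = i" | "t = Suc i" | "Suc i < t" by linarith
    then show "E (ys ! t) (ys ! Suc t)"
    proof cases
      case 1
      then show ?thesis unfolding ys_def using len ij ed by (simp add: nth_append)
    next
      case 2
      then show ?thesis unfolding ys_def using len ij ei by (simp add: nth_append min_def)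
    next
      case 3
      have "ys ! t = v" unfolding ys_def using len ij 3 by (simp add: nth_append min_def)
      moreover have "ys ! Suc t = xs ! j" unfolding ys_def using len ij 3 by (simp add: nth_append min_def)
      ultimately show ?thesis using ej sym by auto
    next
      case 4
      define q where "q = j + t - Suc (Suc i)"
      have "ys ! t = xs ! q" unfolding ys_def q_def using len ij 4
        by (simp add: nth_append min_def nth_Cons' )
      moreover have "ys ! Suc t = xs ! (j + t - Suc i)" unfolding ys_def using len ij 4
        by (simp add: nth_append min_def nth_Cons')
      moreover have "j + t - Suc i = Suc q" using 4 ij unfolding q_def by simp
      moreover have "q < m" using t 4 ij ji unfolding k_def q_def by linarith
      ultimately show ?thesis using ed by simp
    qed
  qed
  then have "gdist E a b \<le> k" by (rule gdist_walk)
  then show False using m ji ij unfolding k_def by linarith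
qed

lemma card_le3:
  fixes S :: "nat set"
  assumes "finite S" "\<forall>i\<in>S. \<forall>j\<in>S. i < j \<longrightarrow> j \<le> i + 2"
  shows "card S \<le> 3"
proof (cases "S = {}")
  case False
  let ?m = "Min S"
  have "S \<subseteq> {?m..?m+2}"
  proof
    fix x assume x: "x \<in> S"
    have "?m \<le> x" using assms(1) x by simp
    moreover have "x \<le> ?m + 2"
      using assms(2) x Min_in[OF assms(1) False] \<open>?m \<le> x\<close> by (cases "?m = x") auto
    ultimately show "x \<in> {?m..?m+2}" by simp
  qed
  then have "card S \<le> card {?m..?m+2}" by (intro card_mono) auto
  then show ?thesis by simp
qed simp

lemma charging:
  assumes g: "ugraph V E" and cg: "connected_graph V E" and gr: "good_round V E l T l'"
  shows "(discrepancy V l)\<^sup>2 \<le> 3 * real (diameter V E) * (\<Sum>(w,v)\<in>T. (l w - l v)\<^sup>2)"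
proof -
  have fin: "finite V" and ne: "V \<noteq> {}" and EV: "\<And>u v. E u v \<Longrightarrow> u \<in> V \<and> v \<in> V"
    and sym: "\<forall>u v. E u v \<longrightarrow> E v u" using g unfolding ugraph_def by blast+
  have TV: "T \<subseteq> V \<times> V"
    and cov: "\<forall>u\<in>V. \<forall>x. E u x \<and> l x < l u \<longrightarrow> (\<exists>w v. (w,v)\<in>T \<and> E u v \<and> l u - l x \<le> l w - l v)"
    using gr unfolding good_round_def by blast+
  have finT: "finite T" using TV fin by (meson finite_SigmaI finite_subset)
  define dd where "dd p = (l (fst p) - l (snd p))\<^sup>2" for p
  have ddT: "(\<Sum>(w,v)\<in>T. (l w - l v)\<^sup>2) = (\<Sum>p\<in>T. dd p)" unfolding dd_def by (simp add: case_prod_beta)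
  have "Max (l ` V) \<in> l ` V" using fin ne by simp
  then obtain a where a: "a \<in> V" "l a = Lmax V l" unfolding Lmax_def by auto
  have "Min (l ` V) \<in> l ` V" using fin ne by simp
  then obtain b where b: "b \<in> V" "l b = Lmin V l" unfolding Lmin_def by auto
  have H: "\<forall>u\<in>V. \<forall>v\<in>V. (u, v) \<in> {(x, y). E x y}\<^sup>*" using cg unfolding connected_graph_def .
  have "(a, b) \<in> {(x, y). E x y}\<^sup>*" using bspec[OF bspec[OF H a(1)] b(1)] .
  then obtain xs0 k0 where "walk E xs0 a b k0" using walk_exists by metis
  then obtain xs where w: "walk E xs a b (gdist E a b)" using gdist_walk(2) by metis
  define m where "m = gdist E a b"
  have mD: "m \<le> diameter V E" unfolding m_def using gdist_le_diam[OF fin a(1) b(1)] by simp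
  have len: "length xs = Suc m" and hd: "hd xs = a" and la: "last xs = b"
    and ed: "\<forall>i<m. E (xs ! i) (xs ! Suc i)" using w unfolding walk_def m_def by simp_all
  have x0: "xs ! 0 = a" using hd len by (cases xs) auto
  have xm: "xs ! m = b"
  proof -
    have "xs \<noteq> []" using len by auto
    then have "last xs = xs ! (length xs - 1)" by (rule last_conv_nth)
    then show ?thesis using la len by simp
  qed
  have inV: "xs ! i \<in> V" if "i < m" for i using EV[OF ed[rule_format, OF that]] by simp
  define d where "d i = l (xs ! i) - l (xs ! Suc i)" for i
  define pos where "pos i = max 0 (d i)" for i
  define K where "K = discrepancy V l"
  have KK: "K = l a - l b" unfolding K_def discrepancy_def using a b by simp
  have "(\<Sum>i<m. d i) = l (xs ! 0) - l (xs ! m)" unfolding d_def by (rule sum_lessThan_telescope')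
  then have Ksum: "K = (\<Sum>i<m. d i)" using KK x0 xm by simp
  have "Min (l ` V) \<le> l a" using fin a(1) by simp
  then have K0: "0 \<le> K" unfolding KK using b(2) unfolding Lmin_def by simp
  have "K \<le> (\<Sum>i<m. pos i)" unfolding Ksum pos_def by (intro sum_mono) auto
  then have "K\<^sup>2 \<le> (\<Sum>i<m. pos i)\<^sup>2" using K0 by (intro power_mono) auto
  also have "\<dots> \<le> real m * (\<Sum>i<m. (pos i)\<^sup>2)" using cauchy_sum[of "{..<m}" pos] by simp
  finally have step1: "K\<^sup>2 \<le> real m * (\<Sum>i<m. (pos i)\<^sup>2)" .
  define I where "I = {i. i < m \<and> 0 < d i}"
  have finI: "finite I" unfolding I_def by simp
  have s2: "(\<Sum>i<m. (pos i)\<^sup>2) = (\<Sum>i\<in>I. (pos i)\<^sup>2)"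
    by (rule sum.mono_neutral_right) (auto simp: I_def pos_def)
  have ex: "\<exists>p. p \<in> T \<and> E (xs ! i) (snd p) \<and> d i \<le> l (fst p) - l (snd p)" if "i \<in> I" for i
  proof -
    have i: "i < m" "0 < d i" using that unfolding I_def by auto
    have "E (xs ! i) (xs ! Suc i)" "l (xs ! Suc i) < l (xs ! i)" using ed i unfolding d_def by auto
    then obtain w v where "(w,v)\<in>T" "E (xs ! i) v" "l (xs ! i) - l (xs ! Suc i) \<le> l w - l v"
      using cov inV[OF i(1)] by blast
    then show ?thesis unfolding d_def by (intro exI[of _ "(w,v)"]) auto
  qed
  define tgt where "tgt i = (SOME p. p \<in> T \<and> E (xs ! i) (snd p) \<and> d i \<le> l (fst p) - l (snd p))" for i
  have tgt: "tgt i \<in> T" "E (xs ! i) (snd (tgt i))" "d i \<le> l (fst (tgt i)) - l (snd (tgt i))" if "i \<in> I" for i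
    using someI_ex[OF ex[OF that]] unfolding tgt_def by blast+
  have "(\<Sum>i\<in>I. (pos i)\<^sup>2) \<le> (\<Sum>i\<in>I. dd (tgt i))"
  proof (intro sum_mono)
    fix i assume i: "i \<in> I"
    then have "0 < d i" unfolding I_def by simp
    then have "pos i = d i" unfolding pos_def by simp
    then show "(pos i)\<^sup>2 \<le> dd (tgt i)" unfolding dd_def using tgt(3)[OF i] \<open>0 < d i\<close>
      by (simp add: power_mono)
  qed
  also have "\<dots> = (\<Sum>p\<in>tgt ` I. \<Sum>i\<in>{i\<in>I. tgt i = p}. dd (tgt i))"
    by (rule sum.group[symmetric]) (use finI in auto)
  also have "\<dots> = (\<Sum>p\<in>tgt ` I. real (card {i\<in>I. tgt i = p}) * dd p)"
    by (intro sum.cong refl) auto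
  also have "\<dots> \<le> (\<Sum>p\<in>tgt ` I. 3 * dd p)"
  proof (intro sum_mono mult_right_mono)
    fix p assume p: "p \<in> tgt ` I"
    show "0 \<le> dd p" unfolding dd_def by simp
    have "card {i\<in>I. tgt i = p} \<le> 3"
    proof (rule card_le3)
      show "finite {i\<in>I. tgt i = p}" using finI by simp
      show "\<forall>i\<in>{i\<in>I. tgt i = p}. \<forall>j\<in>{i\<in>I. tgt i = p}. i < j \<longrightarrow> j \<le> i + 2"
      proof (intro ballI impI)
        fix i j assume i: "i \<in> {i\<in>I. tgt i = p}" and j: "j \<in> {i\<in>I. tgt i = p}" and ij: "i < j"
        have "E (xs ! i) (snd p)" using tgt(2)[of i] i by simp
        moreover have "E (xs ! j) (snd p)" using tgt(2)[of j] j by simp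
        moreover have "j \<le> m" using j unfolding I_def by simp
        ultimately show "j \<le> i + 2"
          using shortcut[OF w refl sym ij] unfolding m_def by blast
      qed
    qed
    then show "real (card {i\<in>I. tgt i = p}) \<le> 3" by simp
  qed
  also have "\<dots> \<le> (\<Sum>p\<in>T. 3 * dd p)"
    by (rule sum_mono2[OF finT]) (use tgt(1) in \<open>auto simp: dd_def\<close>)
  finally have "(\<Sum>i<m. (pos i)\<^sup>2) \<le> 3 * (\<Sum>p\<in>T. dd p)" using s2 by (simp add: sum_distrib_left)
  then have "K\<^sup>2 \<le> real m * (3 * (\<Sum>p\<in>T. dd p))" using step1
    by (meson mult_left_mono of_nat_0_le_iff order_trans)
  also have "\<dots> \<le> real (diameter V E) * (3 * (\<Sum>p\<in>T. dd p))"
    using mD by (intro mult_right_mono) (auto simp: dd_def intro: sum_nonneg)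
  finally show ?thesis unfolding K_def ddT by simp
qed

lemma flow_bounds:
  assumes fin: "finite V" and gr: "good_round V E l T l'" and u: "u \<in> V"
  shows "0 \<le> inflow V l T u" "inflow V l T u \<le> (Lmax V l - l u) / 2"
    "0 \<le> outflow V l T u" "outflow V l T u \<le> (l u - Lmin V l) / 2"
proof -
  have TV: "T \<subseteq> V \<times> V" and dec: "\<forall>(w,u)\<in>T. l u < l w"
    and in1: "\<forall>w w' u. (w,u)\<in>T \<longrightarrow> (w',u)\<in>T \<longrightarrow> w=w'"
    and out1: "\<forall>u v v'. (u,v)\<in>T \<longrightarrow> (u,v')\<in>T \<longrightarrow> v=v'"
    using gr unfolding good_round_def by blast+
  have finT: "finite T" using TV fin by (meson finite_SigmaI finite_subset)
  have maxle: "l x \<le> Lmax V l" if "x \<in> V" for x unfolding Lmax_def using fin that by simp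
  have minle: "Lmin V l \<le> l x" if "x \<in> V" for x unfolding Lmin_def using fin that by simp
  let ?S = "T \<inter> (V \<times> {u})"
  let ?R = "T \<inter> ({u} \<times> V)"
  have nn: "0 \<le> (\<lambda>(w, v). (l w - l v) / 2) p" if "p \<in> T" for p using dec that by auto
  show "0 \<le> inflow V l T u" unfolding inflow_def by (rule sum_nonneg) (use nn in auto)
  show "0 \<le> outflow V l T u" unfolding outflow_def by (rule sum_nonneg) (use nn in auto)
  show "inflow V l T u \<le> (Lmax V l - l u) / 2"
  proof (cases "?S = {}")
    case True
    then show ?thesis unfolding inflow_def using maxle[OF u] by simp
  next
    case False
    then obtain w where w: "(w, u) \<in> T" "w \<in> V" by auto
    then have "?S = {(w, u)}" using in1 by auto
    then show ?thesis unfolding inflow_def using maxle[OF w(2)] by simp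
  qed
  show "outflow V l T u \<le> (l u - Lmin V l) / 2"
  proof (cases "?R = {}")
    case True
    then show ?thesis unfolding outflow_def using minle[OF u] by simp
  next
    case False
    then obtain v where v: "(u, v) \<in> T" "v \<in> V" by auto
    then have "?R = {(u, v)}" using out1 by auto
    then show ?thesis unfolding outflow_def using minle[OF v(2)] by simp
  qed
qed

lemma mono_round:
  assumes fin: "finite V" and ne: "V \<noteq> {}" and gr: "good_round V E l T l'"
  shows "Lmax V l' \<le> Lmax V l" "Lmin V l \<le> Lmin V l'"
proof -
  have L: "\<forall>u\<in>V. l' u = l u + inflow V l T u - outflow V l T u"
    using gr unfolding good_round_def by blast
  have maxle: "l x \<le> Lmax V l" if "x \<in> V" for x unfolding Lmax_def using fin that by simp
  have minle: "Lmin V l \<le> l x" if "x \<in> V" for x unfolding Lmin_def using fin that by simp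
  have "l' u \<le> Lmax V l" if "u \<in> V" for u
    using flow_bounds[OF fin gr that] L maxle[OF that] that by auto
  then show "Lmax V l' \<le> Lmax V l" unfolding Lmax_def[of V l'] using fin ne by simp
  have "Lmin V l \<le> l' u" if "u \<in> V" for u
    using flow_bounds[OF fin gr that] L minle[OF that] that by auto
  then show "Lmin V l \<le> Lmin V l'" unfolding Lmin_def[of V l'] using fin ne by simp
qed

lemma phi_upper:
  fixes l :: "'a \<Rightarrow> real"
  assumes fin: "finite V" and ne: "V \<noteq> {}" and mu: "(\<Sum>u\<in>V. l u) = real (card V) * \<mu>"
  shows "(\<Sum>u\<in>V. (l u - \<mu>)\<^sup>2) \<le> real (card V) * (discrepancy V l)\<^sup>2 / 4"
proof -
  define c where "c = (Lmax V l + Lmin V l) / 2"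
  define K where "K = discrepancy V l"
  have maxle: "l x \<le> Lmax V l" if "x \<in> V" for x unfolding Lmax_def using fin that by simp
  have minle: "Lmin V l \<le> l x" if "x \<in> V" for x unfolding Lmin_def using fin that by simp
  have "(\<Sum>u\<in>V. (l u - c)\<^sup>2) = (\<Sum>u\<in>V. (l u - \<mu>)\<^sup>2 + 2 * (\<mu> - c) * (l u - \<mu>) + (\<mu> - c)\<^sup>2)"
    by (intro sum.cong refl) (simp add: power2_eq_square algebra_simps)
  also have "\<dots> = (\<Sum>u\<in>V. (l u - \<mu>)\<^sup>2) + 2 * (\<mu> - c) * (\<Sum>u\<in>V. l u - \<mu>) + real (card V) * (\<mu> - c)\<^sup>2"
    by (simp add: sum.distrib sum_distrib_left)
  also have "(\<Sum>u\<in>V. l u - \<mu>) = 0" using mu by (simp add: sum_subtractf)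
  finally have eq: "(\<Sum>u\<in>V. (l u - c)\<^sup>2) = (\<Sum>u\<in>V. (l u - \<mu>)\<^sup>2) + real (card V) * (\<mu> - c)\<^sup>2" by simp
  have "(\<Sum>u\<in>V. (l u - c)\<^sup>2) \<le> (\<Sum>u\<in>V. (K / 2)\<^sup>2)"
  proof (intro sum_mono)
    fix u assume u: "u \<in> V"
    have aux: "\<And>(x::real) (M::real) (m::real). x \<le> M \<Longrightarrow> m \<le> x \<Longrightarrow> \<bar>x - (M+m)/2\<bar> \<le> \<bar>(M-m)/2\<bar>"
      by (auto simp: abs_if field_simps)
    have "\<bar>l u - c\<bar> \<le> \<bar>K / 2\<bar>" unfolding c_def K_def discrepancy_def
      by (rule aux[OF maxle[OF u] minle[OF u]])
    then show "(l u - c)\<^sup>2 \<le> (K / 2)\<^sup>2" using abs_le_square_iff by blast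
  qed
  also have "\<dots> = real (card V) * K\<^sup>2 / 4" by (simp add: power2_eq_square)
  finally show ?thesis using eq unfolding K_def
    by (smt (verit) mult_nonneg_nonneg of_nat_0_le_iff zero_le_power2)
qed

lemma phi_lower:
  fixes l :: "'a \<Rightarrow> real"
  assumes fin: "finite V" and ne: "V \<noteq> {}"
  shows "(discrepancy V l)\<^sup>2 \<le> 2 * (\<Sum>u\<in>V. (l u - \<mu>)\<^sup>2)"
proof -
  have "Max (l ` V) \<in> l ` V" using fin ne by simp
  then obtain a where a: "a \<in> V" "l a = Lmax V l" unfolding Lmax_def by auto
  have "Min (l ` V) \<in> l ` V" using fin ne by simp
  then obtain b where b: "b \<in> V" "l b = Lmin V l" unfolding Lmin_def by auto
  have K: "discrepancy V l = l a - l b" unfolding discrepancy_def using a b by simp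
  show ?thesis
  proof (cases "a = b")
    case True
    then show ?thesis unfolding K by (simp add: sum_nonneg)
  next
    case False
    have "(\<Sum>u\<in>{a,b}. (l u - \<mu>)\<^sup>2) \<le> (\<Sum>u\<in>V. (l u - \<mu>)\<^sup>2)"
      by (rule sum_mono2) (use fin a b in auto)
    then have "(l a - \<mu>)\<^sup>2 + (l b - \<mu>)\<^sup>2 \<le> (\<Sum>u\<in>V. (l u - \<mu>)\<^sup>2)" using False by simp
    moreover have "(l a - l b)\<^sup>2 \<le> 2 * ((l a - \<mu>)\<^sup>2 + (l b - \<mu>)\<^sup>2)"
    proof -
      have "0 \<le> (l a - \<mu> + (l b - \<mu>))\<^sup>2" by simp
      then show ?thesis by (simp add: power2_eq_square algebra_simps)
    qed
    ultimately show ?thesis unfolding K by (smt (verit))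
  qed
qed

lemma contract:
  fixes \<Phi> \<Phi>' S K X :: real
  assumes "\<Phi>' \<le> \<Phi> - S / 2" "K\<^sup>2 \<le> 3 * D * S" "\<Phi> \<le> n * K\<^sup>2 / 4" "0 \<le> S" "0 \<le> n" "0 \<le> D"
  shows "\<Phi>' \<le> (1 - 1 / (2 * n * D + 1)) * \<Phi>"
proof -
  have "n * K\<^sup>2 \<le> n * (3 * D * S)" using assms by (intro mult_left_mono) auto
  then have "\<Phi> \<le> (3/4) * (n * D) * S" using assms(3) by simp
  also have "\<dots> \<le> (2 * n * D + 1) / 2 * S" using assms by (intro mult_right_mono) auto
  finally have "\<Phi> \<le> (2 * n * D + 1) / 2 * S" .
  moreover have "0 \<le> n * D" using assms by simp
  then have pos: "0 < 2 * n * D + 1" by linarith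
  ultimately have "\<Phi> / (2 * n * D + 1) \<le> S / 2" by (simp add: field_simps)
  then have "\<Phi>' \<le> \<Phi> - \<Phi> / (2 * n * D + 1)" using assms(1) by linarith
  also have "\<dots> = (1 - 1 / (2 * n * D + 1)) * \<Phi>" by (simp add: algebra_simps)
  finally show ?thesis .
qed

lemma convergence:
  assumes g: "ugraph V E" and cg: "connected_graph V E" and ex: "alg1_execution V E ls Ts"
    and K0: "discrepancy V (ls 0) > 0" and ep: "\<epsilon> > 0"
    and t: "real t \<ge> (2 * real (card V) * real (diameter V E) + 1) *
                ln (real_of_int \<lceil>2 * real (card V) * (discrepancy V (ls 0))\<^sup>2 / \<epsilon>\<^sup>2\<rceil>)"
  shows "discrepancy V (ls t) \<le> \<epsilon>"
proof -
  have fin: "finite V" and ne: "V \<noteq> {}" using g unfolding ugraph_def by blast+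
  define n where "n = real (card V)"
  define D where "D = real (diameter V E)"
  have npos: "0 < n" unfolding n_def using fin ne by (simp add: card_gt_0_iff)
  have D0: "0 \<le> D" unfolding D_def by simp
  define \<mu> where "\<mu> = (\<Sum>u\<in>V. ls 0 u) / n"
  define \<Phi> where "\<Phi> s = (\<Sum>u\<in>V. (ls s u - \<mu>)\<^sup>2)" for s
  define r where "r = 1 / (2 * n * D + 1)"
  have gr: "good_round V E (ls s) (Ts s) (ls (Suc s))" for s
    using round_good[OF g] ex unfolding alg1_execution_def by blast
  have sums: "(\<Sum>u\<in>V. ls s u) = (\<Sum>u\<in>V. ls 0 u)" for s
  proof (induction s)
    case (Suc s)
    then show ?case using potential(2)[OF fin gr[of s]] by simp
  qed simp
  have musum: "(\<Sum>u\<in>V. ls s u) = real (card V) * \<mu>" for s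
    using sums[of s] npos unfolding \<mu>_def n_def by simp
  have up: "\<Phi> s \<le> n * (discrepancy V (ls s))\<^sup>2 / 4" for s
    unfolding \<Phi>_def n_def by (rule phi_upper[OF fin ne musum])
  have low: "(discrepancy V (ls s))\<^sup>2 \<le> 2 * \<Phi> s" for s
    unfolding \<Phi>_def by (rule phi_lower[OF fin ne])
  have Phi0: "0 \<le> \<Phi> s" for s unfolding \<Phi>_def by (simp add: sum_nonneg)
  have step: "\<Phi> (Suc s) \<le> (1 - r) * \<Phi> s" for s
  proof -
    define S where "S = (\<Sum>(w,v)\<in>Ts s. (ls s w - ls s v)\<^sup>2)"
    have S0: "0 \<le> S" unfolding S_def by (intro sum_nonneg) auto
    have a: "\<Phi> (Suc s) \<le> \<Phi> s - S / 2" unfolding \<Phi>_def S_def by (rule potential(1)[OF fin gr])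
    have b: "(discrepancy V (ls s))\<^sup>2 \<le> 3 * D * S" unfolding D_def S_def by (rule charging[OF g cg gr])
    show ?thesis unfolding r_def by (rule contract[OF a b up S0 _ D0]) (use npos in simp)
  qed
  have nD: "0 \<le> 2 * n * D" using npos D0 by simp
  then have h1: "1 \<le> 2 * n * D + 1" by linarith
  have pos1: "0 < 2 * n * D + 1" using h1 by linarith
  have "1 / (2 * n * D + 1) \<le> 1 / 1" by (rule divide_left_mono[OF h1]) (simp_all add: pos1)
  then have "1 / (2 * n * D + 1) \<le> 1" by simp
  then have r01: "0 \<le> 1 - r" unfolding r_def by simp
  have dec: "\<Phi> s \<le> (1 - r) ^ s * \<Phi> 0" for s
  proof (induction s)
    case (Suc s)
    have "\<Phi> (Suc s) \<le> (1 - r) * \<Phi> s" by (rule step)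
    also have "\<dots> \<le> (1 - r) * ((1 - r) ^ s * \<Phi> 0)" using Suc r01 by (intro mult_left_mono) auto
    finally show ?case by (simp add: mult.assoc)
  qed simp
  have "(1 - r) ^ t \<le> exp (- r) ^ t"
    using r01 by (intro power_mono) (use exp_ge_add_one_self[of "-r"] in auto)
  also have "\<dots> = exp (- (r * real t))" using exp_of_nat_mult[of t "-r"] by (simp add: mult.commute)
  finally have pw: "(1 - r) ^ t \<le> exp (- (r * real t))" .
  define K where "K = discrepancy V (ls 0)"
  define Y where "Y = 2 * n * K\<^sup>2 / \<epsilon>\<^sup>2"
  define C where "C = real_of_int \<lceil>Y\<rceil>"
  have Ypos: "0 < Y" unfolding Y_def K_def using npos K0 ep by simp
  have YC: "Y \<le> C" unfolding C_def by simp
  have Cpos: "0 < C" using Ypos YC by linarith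
  have "ln C \<le> r * real t"
  proof -
    have "(2 * n * D + 1) * ln C \<le> real t" using t unfolding C_def Y_def K_def n_def D_def by simp
    moreover have "0 < 2 * n * D + 1" by (rule pos1)
    ultimately show ?thesis unfolding r_def by (simp add: field_simps mult.commute)
  qed
  then have "exp (- (r * real t)) \<le> exp (- ln C)" by simp
  also have "\<dots> = 1 / C" using Cpos by (simp add: exp_minus' )
  also have "\<dots> \<le> 1 / Y" using Ypos YC by (simp add: frac_le)
  finally have ex1: "exp (- (r * real t)) \<le> 1 / Y" .
  have "(discrepancy V (ls t))\<^sup>2 \<le> 2 * \<Phi> t" by (rule low)
  also have "\<dots> \<le> 2 * ((1 - r) ^ t * \<Phi> 0)" using dec[of t] by simp
  also have "\<dots> \<le> 2 * (exp (- (r * real t)) * \<Phi> 0)" using mult_right_mono[OF pw Phi0[of 0]] by simp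
  also have "\<dots> \<le> 2 * ((1 / Y) * (n * K\<^sup>2 / 4))"
  proof -
    have upK: "\<Phi> 0 \<le> n * K\<^sup>2 / 4" using up[of 0] unfolding K_def .
    have "exp (- (r * real t)) * \<Phi> 0 \<le> (1 / Y) * (n * K\<^sup>2 / 4)"
      by (rule mult_mono[OF ex1 upK]) (simp_all add: Phi0 less_imp_le[OF Ypos])
    then show ?thesis by simp
  qed
  also have "\<dots> = \<epsilon>\<^sup>2 / 4"
  proof -
    have "K \<noteq> 0" using K0 unfolding K_def by simp
    moreover have "\<epsilon> \<noteq> 0" using ep by simp
    ultimately show ?thesis unfolding Y_def using npos by (simp add: field_simps)
  qed
  also have "\<dots> \<le> \<epsilon>\<^sup>2" by simp
  finally have "(discrepancy V (ls t))\<^sup>2 \<le> \<epsilon>\<^sup>2" .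
  then show ?thesis by (rule power2_le_imp_le) (use ep in simp)
qed

theorem theorem1:
  fixes V :: "'a set" and E :: "'a \<Rightarrow> 'a \<Rightarrow> bool"
  assumes "ugraph V E" and "connected_graph V E"
  shows "alg1_monotonic V E \<and>
    (\<forall>ls Ts \<epsilon>. alg1_execution V E ls Ts \<longrightarrow> card V \<ge> 2 \<longrightarrow>
        (\<forall>u\<in>V. ls 0 u \<ge> 0) \<longrightarrow> discrepancy V (ls 0) > 0 \<longrightarrow> \<epsilon> > 0 \<longrightarrow>
        (\<forall>t. real t \<ge> (2 * real (card V) * real (diameter V E) + 1) *
                ln (real_of_int \<lceil>2 * real (card V) * (discrepancy V (ls 0))\<^sup>2 / \<epsilon>\<^sup>2\<rceil>)
             \<longrightarrow> discrepancy V (ls t) \<le> \<epsilon>))"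
proof
  have fin: "finite V" and ne: "V \<noteq> {}" using assms(1) unfolding ugraph_def by blast+
  show "alg1_monotonic V E"
    unfolding alg1_monotonic_def
  proof (intro allI impI)
    fix ls Ts assume ex: "alg1_execution V E ls Ts"
    have gr: "good_round V E (ls s) (Ts s) (ls (Suc s))" for s
      using round_good[OF assms(1)] ex unfolding alg1_execution_def by blast
    have A: "\<forall>t. \<forall>(w, u)\<in>Ts t. ls t u < ls t w"
      using gr unfolding good_round_def by blast
    have B: "\<forall>t. Lmax V (ls (Suc t)) \<le> Lmax V (ls t) \<and> Lmin V (ls t) \<le> Lmin V (ls (Suc t))"
      using mono_round[OF fin ne gr] by blast
    show "(\<forall>t. \<forall>(w, u)\<in>Ts t. ls t u < ls t w) \<and>
       (\<forall>t. Lmax V (ls (Suc t)) \<le> Lmax V (ls t) \<and> Lmin V (ls t) \<le> Lmin V (ls (Suc t)))"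
      using A B by blast
  qed
  show "\<forall>ls Ts \<epsilon>. alg1_execution V E ls Ts \<longrightarrow> card V \<ge> 2 \<longrightarrow>
        (\<forall>u\<in>V. ls 0 u \<ge> 0) \<longrightarrow> discrepancy V (ls 0) > 0 \<longrightarrow> \<epsilon> > 0 \<longrightarrow>
        (\<forall>t. real t \<ge> (2 * real (card V) * real (diameter V E) + 1) *
                ln (real_of_int \<lceil>2 * real (card V) * (discrepancy V (ls 0))\<^sup>2 / \<epsilon>\<^sup>2\<rceil>)
             \<longrightarrow> discrepancy V (ls t) \<le> \<epsilon>)"
    using convergence[OF assms] by blast
qed

end
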